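(* Let $\mu_1>\mu_2$ be real numbers, $\sigma>0$, $p,q\in[0,1]$, and let $\tilde n_+,\tilde n_-$ be positive integers. Let $I^+_1,\dots,I^+_{\tilde n_+}$ be i.i.d. $\mathrm{Bernoulli}(p)$ and $I^-_1,\dots,I^-_{\tilde n_-}$ be i.i.d. $\mathrm{Bernoulli}(q)$. Let $\tilde X^+_1,\dots,\tilde X^+_{\tilde n_+}$ and $\tilde X^-_1,\dots,\tilde X^-_{\tilde n_-}$ be real random variables such that the pairs $(I^+_i,\tilde X^+_i)$, $i=1,\dots,\tilde n_+$, and $(I^-_j,\tilde X^-_j)$, $j=1,\dots,\tilde n_-$, are all mutually independent, and: conditional on $I^+_i=1$, $\tilde X^+_i\sim\mathcal N(\mu_1,\sigma^2)$, and conditional on $I^+_i=0$, $\tilde X^+_i\sim\mathcal N(\mu_2,\sigma^2)$; conditional on $I^-_j=1$, $\tilde X^-_j\sim\mathcal N(\mu_2,\sigma^2)$, and conditional on $I^-_j=0$, $\tilde X^-_j\sim\mathcal N(\mu_1,\sigma^2)$. Let $\Delta=p-q$ and $$\hat\theta=\frac12\Big(\frac{1}{\tilde n_+}\sum_{i=1}^{\tilde n_+}\tilde X^+_i+\frac{1}{\tilde n_-}\sum_{j=1}^{\tilde n_-}\tilde X^-_j\Big).$$ Then for every $\delta>0$, with probability at least $$1-2\exp\Big(-\frac{2\delta^2}{9\sigma^2}\cdot\frac{\tilde n_+\tilde n_-}{\tilde n_-+\tilde n_+}\Big)-2\exp\Big(-\frac{8\tilde n_+\delta^2}{9(\mu_1-\mu_2)^2}\Big)-2\exp\Big(-\frac{8\tilde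 n_-\delta^2}{9(\mu_1-\mu_2)^2}\Big),$$ we have $$\Big|\hat\theta-\frac{\mu_1+\mu_2}{2}-\frac{\Delta(\mu_1-\mu_2)}{2}\Big|\le\delta.$$
   Context: This models pseudo-labeling of unlabeled data for a binary problem where $X\mid Y=+1\sim\mathcal N(\mu_1,\sigma^2)$ and $X\mid Y=-1\sim\mathcal N(\mu_2,\sigma^2)$ (so the Bayes classifier thresholds at $(\mu_1+\mu_2)/2$). The $\tilde X^+_i$ are the unlabeled points assigned pseudo-label $+1$ by a base classifier that is correct on each with probability $p$ (indicator $I^+_i$), and the $\tilde X^-_j$ are those assigned pseudo-label $-1$, correct with probability $q$ (indicator $I^-_j$). *)

theory Defs
  imports "HOL-Probability.Probability"
begin

definition gauss_measure :: "real \<Rightarrow> real \<Rightarrow> real measure" where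
  "gauss_measure m s = density lborel (normal_density m s)"

end

theory Submission
  imports Defs
begin

lemma nn_integral_normal_density: "s > 0 \<Longrightarrow> (\<integral>\<^sup>+x. ennreal (normal_density m s x) \<partial>lborel) = 1"
  by (subst nn_integral_eq_integral) (auto intro: integrable_normal_density integral_normal_density)

lemma normal_mgf:
  assumes "s > 0"
  shows "(\<integral>\<^sup>+x. ennreal (normal_density m s x * exp (l * (x - m))) \<partial>lborel) = ennreal (exp (l^2 * s^2 / 2))"
proof -
  have e: "l * (x - m) - (x - m)^2 / (2 * s^2) = l^2 * s^2 / 2 - (x - (m + l * s^2))^2 / (2 * s^2)" for x
    using assms by (simp add: field_simps power2_eq_square)
  have eq: "normal_density m s x * exp (l * (x - m)) = exp (l^2 * s^2 / 2) * normal_density (m + l * s^2) s x" for x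
    unfolding normal_density_def
    by (simp add: mult_ac exp_add[symmetric] e)
  show ?thesis
    by (simp add: eq ennreal_mult nn_integral_cmult nn_integral_normal_density assms)
qed

lemma meas_test:
  fixes a c :: real
  shows "(\<lambda>(b::bool, x::real). (x - (if b then a else c)) / d) \<in> borel_measurable (count_space UNIV \<Otimes>\<^sub>M borel)"
  by measurable

lemma meas_test2:
  shows "(\<lambda>(b::bool, x::real). (of_bool b :: real)) \<in> borel_measurable (count_space UNIV \<Otimes>\<^sub>M borel)"
  by measurable

lemma (in prob_space) subdist_nn_integral:
  fixes B :: "'a \<Rightarrow> bool" and X :: "'a \<Rightarrow> real" and f :: "real \<Rightarrow> ennreal"
  assumes B[measurable]: "B \<in> measurable M (count_space UNIV)"
    and X[measurable]: "X \<in> borel_measurable M"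
    and law: "\<And>A. A \<in> sets borel \<Longrightarrow>
        measure M {\<omega> \<in> space M. B \<omega> \<and> X \<omega> \<in> A} = c * measure (gauss_measure m s) A"
    and c: "c \<ge> 0" and s: "s > 0"
    and f[measurable]: "f \<in> borel_measurable borel"
  shows "(\<integral>\<^sup>+\<omega>. f (X \<omega>) * indicator {\<omega>\<in>space M. B \<omega>} \<omega> \<partial>M)
       = ennreal c * (\<integral>\<^sup>+x. ennreal (normal_density m s x) * f x \<partial>lborel)"
proof -
  interpret G: prob_space "gauss_measure m s"
    unfolding gauss_measure_def using s by (rule prob_space_normal_density)
  define N where "N = distr (density M (indicator {\<omega>\<in>space M. B \<omega>})) borel X"
  have N: "N = density lborel (\<lambda>x. ennreal c * ennreal (normal_density m s x))"
  proof (rule measure_eqI)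
    show "sets N = sets (density lborel (\<lambda>x. ennreal c * ennreal (normal_density m s x)))"
      by (simp add: N_def)
  next
    fix A assume "A \<in> sets N"
    then have A[measurable]: "A \<in> sets borel" by (simp add: N_def)
    have "emeasure N A = emeasure (density M (indicator {\<omega>\<in>space M. B \<omega>})) (X -` A \<inter> space M)"
      unfolding N_def by (subst emeasure_distr) auto
    also have "\<dots> = (\<integral>\<^sup>+\<omega>. indicator {\<omega>\<in>space M. B \<omega>} \<omega> * indicator (X -` A \<inter> space M) \<omega> \<partial>M)"
      by (rule emeasure_density) measurable
    also have "\<dots> = (\<integral>\<^sup>+\<omega>. indicator {\<omega>\<in>space M. B \<omega> \<and> X \<omega> \<in> A} \<omega> \<partial>M)"
      by (rule nn_integral_cong) (auto split: split_indicator)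
    also have "\<dots> = emeasure M {\<omega>\<in>space M. B \<omega> \<and> X \<omega> \<in> A}"
      by (intro nn_integral_indicator) measurable
    also have "\<dots> = ennreal (c * measure (gauss_measure m s) A)"
      by (simp add: emeasure_eq_measure law)
    also have "\<dots> = ennreal c * emeasure (gauss_measure m s) A"
      by (simp add: G.emeasure_eq_measure ennreal_mult c)
    also have "emeasure (gauss_measure m s) A = (\<integral>\<^sup>+x. ennreal (normal_density m s x) * indicator A x \<partial>lborel)"
      unfolding gauss_measure_def by (rule emeasure_density) auto
    also have "ennreal c * \<dots> = emeasure (density lborel (\<lambda>x. ennreal c * ennreal (normal_density m s x))) A"
      by (subst emeasure_density) (auto simp: nn_integral_cmult[symmetric] mult.assoc)
    finally show "emeasure N A = emeasure (density lborel (\<lambda>x. ennreal c * ennreal (normal_density m s x))) A" .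
  qed
  have "(\<integral>\<^sup>+\<omega>. f (X \<omega>) * indicator {\<omega>\<in>space M. B \<omega>} \<omega> \<partial>M)
      = (\<integral>\<^sup>+\<omega>. indicator {\<omega>\<in>space M. B \<omega>} \<omega> * f (X \<omega>) \<partial>M)"
    by (simp add: mult.commute)
  also have "\<dots> = (\<integral>\<^sup>+\<omega>. f (X \<omega>) \<partial>density M (indicator {\<omega>\<in>space M. B \<omega>}))"
    by (subst nn_integral_density) auto
  also have "\<dots> = (\<integral>\<^sup>+x. f x \<partial>N)"
    unfolding N_def by (subst nn_integral_distr) auto
  also have "\<dots> = (\<integral>\<^sup>+x. ennreal c * ennreal (normal_density m s x) * f x \<partial>lborel)"
    unfolding N by (subst nn_integral_density) auto
  also have "\<dots> = ennreal c * (\<integral>\<^sup>+x. ennreal (normal_density m s x) * f x \<partial>lborel)"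
    by (subst nn_integral_cmult[symmetric]) (auto simp: mult.assoc)
  finally show ?thesis .
qed


lemma normal_mgf':
  assumes "s > 0"
  shows "(\<integral>\<^sup>+x. ennreal (normal_density m s x) * ennreal (exp (l * (x - m))) \<partial>lborel) = ennreal (exp (l^2 * s^2 / 2))"
  using normal_mgf[OF assms, of m l] by (simp add: ennreal_mult)

lemma (in prob_space) mixture_mgf:
  fixes B :: "'a \<Rightarrow> bool" and X :: "'a \<Rightarrow> real"
  assumes B[measurable]: "B \<in> measurable M (count_space UNIV)"
    and X[measurable]: "X \<in> borel_measurable M"
    and law1: "\<And>A. A \<in> sets borel \<Longrightarrow>
        measure M {\<omega> \<in> space M. B \<omega> \<and> X \<omega> \<in> A} = c * measure (gauss_measure m1 s) A"
    and law0: "\<And>A. A \<in> sets borel \<Longrightarrow>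
        measure M {\<omega> \<in> space M. \<not> B \<omega> \<and> X \<omega> \<in> A} = (1 - c) * measure (gauss_measure m0 s) A"
    and c: "0 \<le> c" "c \<le> 1" and s: "s > 0"
  shows "(\<integral>\<^sup>+\<omega>. ennreal (exp (l * (X \<omega> - (if B \<omega> then m1 else m0)))) \<partial>M) = ennreal (exp (l^2 * s^2 / 2))"
proof -
  have nB[measurable]: "(\<lambda>\<omega>. \<not> B \<omega>) \<in> measurable M (count_space UNIV)"
    by measurable
  have "(\<integral>\<^sup>+\<omega>. ennreal (exp (l * (X \<omega> - (if B \<omega> then m1 else m0)))) \<partial>M)
     = (\<integral>\<^sup>+\<omega>. ennreal (exp (l * (X \<omega> - m1))) * indicator {\<omega>\<in>space M. B \<omega>} \<omega>
          + ennreal (exp (l * (X \<omega> - m0))) * indicator {\<omega>\<in>space M. \<not> B \<omega>} \<omega> \<partial>M)"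
    by (rule nn_integral_cong) (auto split: split_indicator)
  also have "\<dots> = (\<integral>\<^sup>+\<omega>. ennreal (exp (l * (X \<omega> - m1))) * indicator {\<omega>\<in>space M. B \<omega>} \<omega> \<partial>M)
          + (\<integral>\<^sup>+\<omega>. ennreal (exp (l * (X \<omega> - m0))) * indicator {\<omega>\<in>space M. \<not> B \<omega>} \<omega> \<partial>M)"
    by (rule nn_integral_add) measurable
  also have "(\<integral>\<^sup>+\<omega>. ennreal (exp (l * (X \<omega> - m1))) * indicator {\<omega>\<in>space M. B \<omega>} \<omega> \<partial>M)
      = ennreal c * ennreal (exp (l^2 * s^2 / 2))"
    using subdist_nn_integral[OF B X law1 c(1) s, of "\<lambda>x. ennreal (exp (l * (x - m1)))"]
    by (simp add: normal_mgf'[OF s])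
  also have "(\<integral>\<^sup>+\<omega>. ennreal (exp (l * (X \<omega> - m0))) * indicator {\<omega>\<in>space M. \<not> B \<omega>} \<omega> \<partial>M)
      = ennreal (1 - c) * ennreal (exp (l^2 * s^2 / 2))"
    using subdist_nn_integral[OF nB X law0 _ s, of "\<lambda>x. ennreal (exp (l * (x - m0)))"] c
    by (simp add: normal_mgf'[OF s])
  also have "ennreal c * ennreal (exp (l^2 * s^2 / 2)) + ennreal (1 - c) * ennreal (exp (l^2 * s^2 / 2))
      = ennreal (exp (l^2 * s^2 / 2))"
    using c by (simp add: ennreal_mult[symmetric] ennreal_plus[symmetric] algebra_simps del: ennreal_plus)
  finally show ?thesis .
qed


lemma (in prob_space) subgauss_tail:
  fixes V :: "'i \<Rightarrow> 'a \<Rightarrow> real" and s :: "'i \<Rightarrow> real"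
  assumes fin: "finite K" and indep: "indep_vars (\<lambda>_. borel) V K"
    and mgf: "\<And>k l. k \<in> K \<Longrightarrow> (\<integral>\<^sup>+\<omega>. ennreal (exp (l * V k \<omega>)) \<partial>M) \<le> ennreal (exp (l^2 * (s k)^2 / 2))"
    and S: "(\<Sum>k\<in>K. (s k)^2) > 0" and t: "t \<ge> 0"
  shows "prob {\<omega>\<in>space M. (\<Sum>k\<in>K. V k \<omega>) \<ge> t} \<le> exp (- (t^2) / (2 * (\<Sum>k\<in>K. (s k)^2)))"
proof (cases "t = 0")
  case True
  then show ?thesis by simp
next
  case False
  with t have t: "t > 0" by auto
  define d where "d = (\<Sum>k\<in>K. (s k)^2)"
  have d: "d > 0" using S by (simp add: d_def)
  define l where "l = t / d"
  have l: "l > 0" using t d by (simp add: l_def)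
  have rv[measurable]: "\<And>k. k \<in> K \<Longrightarrow> random_variable borel (V k)"
    using indep unfolding indep_vars_def by blast
  have "ennreal (prob {\<omega>\<in>space M. (\<Sum>k\<in>K. V k \<omega>) \<ge> t}) = emeasure M {\<omega>\<in>space M. (\<Sum>k\<in>K. V k \<omega>) \<ge> t}"
    by (simp add: emeasure_eq_measure)
  also have "\<dots> \<le> ennreal (exp (-l*t)) * (\<integral>\<^sup>+x\<in>space M. exp (l * (\<Sum>k\<in>K. V k x)) \<partial>M)"
    by (intro Chernoff_ineq_nn_integral_ge l) (auto intro!: borel_measurable_sum rv)
  also have "(\<integral>\<^sup>+x\<in>space M. exp (l * (\<Sum>k\<in>K. V k x)) \<partial>M) =
             (\<integral>\<^sup>+x. (\<Prod>k\<in>K. ennreal (exp (l * V k x))) \<partial>M)"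
    by (intro nn_integral_cong)
       (simp_all add: sum_distrib_left exp_sum fin prod_ennreal)
  also have "\<dots> = (\<Prod>k\<in>K. \<integral>\<^sup>+x. ennreal (exp (l * V k x)) \<partial>M)"
    by (intro indep_vars_nn_integral fin indep_vars_compose2[OF indep]) auto
  also have "ennreal (exp (-l * t)) * \<dots> \<le>
               ennreal (exp (-l * t)) * (\<Prod>k\<in>K. ennreal (exp (l^2 * (s k)^2 / 2)))"
    by (intro mult_left_mono prod_mono_ennreal mgf) auto
  also have "\<dots> = ennreal (exp (-l*t) * (\<Prod>k\<in>K. exp (l^2 * (s k)^2 / 2)))"
    by (simp add: prod_ennreal prod_nonneg flip: ennreal_mult)
  also have "exp (-l*t) * (\<Prod>k\<in>K. exp (l^2 * (s k)^2 / 2)) = exp (d * l^2 / 2 - l * t)"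
    by (simp add: exp_diff exp_minus sum_divide_distrib sum_distrib_left
                  sum_distrib_right exp_sum fin divide_simps mult_ac d_def)
  also have "d * l^2 / 2 - l * t = - (t^2) / (2 * d)"
    using d by (simp add: l_def field_simps power2_eq_square)
  finally show ?thesis
    by (subst (asm) ennreal_le_iff) (simp_all add: d_def)
qed

theorem theorem1:
  fixes M :: "'a measure"
    and mu1 mu2 sigma p q delta :: real
    and np nm :: nat
    and Ip Im :: "nat \<Rightarrow> 'a \<Rightarrow> bool"
    and Xp Xm :: "nat \<Rightarrow> 'a \<Rightarrow> real"
  assumes "prob_space M"
    and "mu1 > mu2" and "sigma > 0"
    and "0 \<le> p" and "p \<le> 1" and "0 \<le> q" and "q \<le> 1"
    and "np > 0" and "nm > 0"
    and indep: "prob_space.indep_vars M (\<lambda>_. count_space UNIV \<Otimes>\<^sub>M borel)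
        (\<lambda>k \<omega>. case k of Inl i \<Rightarrow> (Ip i \<omega>, Xp i \<omega>) | Inr j \<Rightarrow> (Im j \<omega>, Xm j \<omega>))
        (Inl ` {..<np} \<union> Inr ` {..<nm})"
    and lawp1: "\<And>i A. i < np \<Longrightarrow> A \<in> sets borel \<Longrightarrow>
        measure M {\<omega> \<in> space M. Ip i \<omega> \<and> Xp i \<omega> \<in> A} = p * measure (gauss_measure mu1 sigma) A"
    and lawp0: "\<And>i A. i < np \<Longrightarrow> A \<in> sets borel \<Longrightarrow>
        measure M {\<omega> \<in> space M. \<not> Ip i \<omega> \<and> Xp i \<omega> \<in> A} = (1 - p) * measure (gauss_measure mu2 sigma) A"
    and lawm1: "\<And>j A. j < nm \<Longrightarrow> A \<in> sets borel \<Longrightarrow>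
        measure M {\<omega> \<in> space M. Im j \<omega> \<and> Xm j \<omega> \<in> A} = q * measure (gauss_measure mu2 sigma) A"
    and lawm0: "\<And>j A. j < nm \<Longrightarrow> A \<in> sets borel \<Longrightarrow>
        measure M {\<omega> \<in> space M. \<not> Im j \<omega> \<and> Xm j \<omega> \<in> A} = (1 - q) * measure (gauss_measure mu1 sigma) A"
    and "delta > 0"
  shows "measure M {\<omega> \<in> space M.
      \<bar>(1/2) * ((1 / real np) * (\<Sum>i<np. Xp i \<omega>) + (1 / real nm) * (\<Sum>j<nm. Xm j \<omega>))
        - (mu1 + mu2) / 2 - (p - q) * (mu1 - mu2) / 2\<bar> \<le> delta}
    \<ge> 1 - 2 * exp (- (2 * delta^2 / (9 * sigma^2)) * (real np * real nm / (real nm + real np)))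
        - 2 * exp (- (8 * real np * delta^2 / (9 * (mu1 - mu2)^2)))
        - 2 * exp (- (8 * real nm * delta^2 / (9 * (mu1 - mu2)^2)))"
proof -
  interpret prob_space M by fact
  have d12: "mu1 - mu2 > 0" using assms(2) by simp
  have npos: "real np > 0" "real nm > 0" using assms(8,9) by auto
  define Y where "Y = (\<lambda>k \<omega>. case k of Inl i \<Rightarrow> (Ip i \<omega>, Xp i \<omega>) | Inr j \<Rightarrow> (Im j \<omega>, Xm j \<omega>))"
  define K where "K = Inl ` {..<np} \<union> Inr ` {..<nm}"
  have finK: "finite K" by (simp add: K_def)
  have indY: "indep_vars (\<lambda>_. count_space UNIV \<Otimes>\<^sub>M borel) Y K"
    using indep unfolding Y_def K_def .
  have rvY: "\<And>k. k \<in> K \<Longrightarrow> Y k \<in> measurable M (count_space UNIV \<Otimes>\<^sub>M borel)"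
    using indY unfolding indep_vars_def by blast
  have Ipm: "Ip i \<in> measurable M (count_space UNIV)" if "i < np" for i
  proof -
    have "(\<lambda>\<omega>. fst (Y (Inl i) \<omega>)) \<in> measurable M (count_space UNIV)"
      by (rule measurable_compose[OF rvY measurable_fst]) (use that in \<open>auto simp: K_def\<close>)
    then show ?thesis by (simp add: Y_def)
  qed
  have Xpm: "Xp i \<in> borel_measurable M" if "i < np" for i
  proof -
    have "(\<lambda>\<omega>. snd (Y (Inl i) \<omega>)) \<in> borel_measurable M"
      by (rule measurable_compose[OF rvY measurable_snd]) (use that in \<open>auto simp: K_def\<close>)
    then show ?thesis by (simp add: Y_def)
  qed
  have Imm: "Im i \<in> measurable M (count_space UNIV)" if "i < nm" for i
  proof -
    have "(\<lambda>\<omega>. fst (Y (Inr i) \<omega>)) \<in> measurable M (count_space UNIV)"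
      by (rule measurable_compose[OF rvY measurable_fst]) (use that in \<open>auto simp: K_def\<close>)
    then show ?thesis by (simp add: Y_def)
  qed
  have Xmm: "Xm i \<in> borel_measurable M" if "i < nm" for i
  proof -
    have "(\<lambda>\<omega>. snd (Y (Inr i) \<omega>)) \<in> borel_measurable M"
      by (rule measurable_compose[OF rvY measurable_snd]) (use that in \<open>auto simp: K_def\<close>)
    then show ?thesis by (simp add: Y_def)
  qed
  have ofb: "(of_bool :: bool \<Rightarrow> real) \<in> borel_measurable (count_space UNIV)" by simp
  have SXp[measurable]: "(\<lambda>\<omega>. \<Sum>i<np. Xp i \<omega>) \<in> borel_measurable M"
    by (rule borel_measurable_sum) (simp add: Xpm)
  have SXm[measurable]: "(\<lambda>\<omega>. \<Sum>i<nm. Xm i \<omega>) \<in> borel_measurable M"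
    by (rule borel_measurable_sum) (simp add: Xmm)
  have SIp[measurable]: "(\<lambda>\<omega>. \<Sum>i<np. (of_bool (Ip i \<omega>) :: real)) \<in> borel_measurable M"
    by (rule borel_measurable_sum) (auto intro: measurable_compose[OF Ipm ofb])
  have SIm[measurable]: "(\<lambda>\<omega>. \<Sum>i<nm. (of_bool (Im i \<omega>) :: real)) \<in> borel_measurable M"
    by (rule borel_measurable_sum) (auto intro: measurable_compose[OF Imm ofb])
  define Bv where "Bv = (\<lambda>k \<omega>. (of_bool (fst (Y k \<omega>)) :: real))"
  have indB: "indep_vars (\<lambda>_. borel) Bv K"
    unfolding Bv_def
    by (rule indep_vars_compose2[OF indY, where Y="\<lambda>_ z. of_bool (fst z)"]) measurable
  interpret gp: prob_space "gauss_measure mu1 sigma"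
    unfolding gauss_measure_def using assms(3) by (rule prob_space_normal_density)
  interpret gm: prob_space "gauss_measure mu2 sigma"
    unfolding gauss_measure_def using assms(3) by (rule prob_space_normal_density)
  have g1: "measure (gauss_measure mu1 sigma) UNIV = 1" "measure (gauss_measure mu2 sigma) UNIV = 1"
    using gp.prob_space gm.prob_space by (simp_all add: gauss_measure_def)
  have EBp: "expectation (Bv (Inl i)) = p" if "i < np" for i
  proof -
    have "expectation (Bv (Inl i)) = expectation (indicator {\<omega>\<in>space M. Ip i \<omega>})"
      by (rule Bochner_Integration.integral_cong) (auto simp: Bv_def Y_def split: split_indicator)
    also have "\<dots> = measure M {\<omega>\<in>space M. Ip i \<omega> \<and> Xp i \<omega> \<in> UNIV}"
      by (simp add: Int_def) (metis (lifting))
    also have "\<dots> = p" using lawp1[OF that, of UNIV] by (simp add: g1)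
    finally show ?thesis .
  qed
  have EBm: "expectation (Bv (Inr j)) = q" if "j < nm" for j
  proof -
    have "expectation (Bv (Inr j)) = expectation (indicator {\<omega>\<in>space M. Im j \<omega>})"
      by (rule Bochner_Integration.integral_cong) (auto simp: Bv_def Y_def split: split_indicator)
    also have "\<dots> = measure M {\<omega>\<in>space M. Im j \<omega> \<and> Xm j \<omega> \<in> UNIV}"
      by (simp add: Int_def) (metis (lifting))
    also have "\<dots> = q" using lawm1[OF that, of UNIV] by (simp add: g1)
    finally show ?thesis .
  qed
  define t1 where "t1 = 2 * delta / (3 * (mu1 - mu2))"
  have t1: "t1 > 0" using d12 assms(15) by (simp add: t1_def)
  define B1 where "B1 = {\<omega>\<in>space M. \<bar>(\<Sum>i<np. (of_bool (Ip i \<omega>) :: real)) - real np * p\<bar> \<ge> real np * t1}"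
  define B2 where "B2 = {\<omega>\<in>space M. \<bar>(\<Sum>i<nm. (of_bool (Im i \<omega>) :: real)) - real nm * q\<bar> \<ge> real nm * t1}"
  have PB1: "prob B1 \<le> 2 * exp (- (8 * real np * delta^2 / (9 * (mu1 - mu2)^2)))"
  proof -
    interpret H: Hoeffding_ineq M "Inl ` {..<np}" Bv "\<lambda>_. 0" "\<lambda>_. 1" "real np * p"
    proof unfold_locales
      show "indep_vars (\<lambda>_. borel) Bv (Inl ` {..<np})"
        by (rule indep_vars_subset[OF indB]) (auto simp: K_def)
      show "real np * p \<equiv> (\<Sum>k\<in>Inl ` {..<np}. expectation (Bv k))"
        by (simp add: sum.reindex EBp)
    qed (auto simp: Bv_def)
    have "prob {x\<in>space M. \<bar>(\<Sum>k\<in>Inl ` {..<np}. Bv k x) - real np * p\<bar> \<ge> real np * t1}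
       \<le> 2 * exp (-2 * (real np * t1)\<^sup>2 / (\<Sum>k\<in>Inl ` {..<np}. (1 - 0)\<^sup>2))"
      using H.Hoeffding_ineq_abs_ge[of "real np * t1"] t1 npos by (simp add: card_image)
    moreover have "{x\<in>space M. \<bar>(\<Sum>k\<in>Inl ` {..<np}. Bv k x) - real np * p\<bar> \<ge> real np * t1} = B1"
    proof -
      have "(\<Sum>k\<in>Inl ` {..<np}. Bv k x) = (\<Sum>i<np. (of_bool (Ip i x) :: real))" for x
        by (subst sum.reindex) (auto simp: Bv_def Y_def)
      then show ?thesis by (simp only: B1_def)
    qed
    moreover have "-2 * (real np * t1)\<^sup>2 / (\<Sum>k\<in>Inl ` {..<np}. (1 - 0)\<^sup>2) = - (8 * real np * delta^2 / (9 * (mu1 - mu2)^2))"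
    proof -
      have "(\<Sum>k\<in>Inl ` {..<np}. (1 - 0::real)\<^sup>2) = real np" by (simp add: card_image)
      moreover have "-2 * (real np * t1)\<^sup>2 / real np = - (2 * real np * t1^2)"
        using npos by (simp add: power2_eq_square field_simps)
      moreover have "t1^2 = 4 * delta^2 / (9 * (mu1 - mu2)^2)"
        by (simp add: t1_def power_divide power_mult_distrib) (simp add: power2_eq_square algebra_simps)
      ultimately show ?thesis by (simp add: mult.assoc card_image)
    qed
    ultimately show ?thesis by metis
  qed
  have PB2: "prob B2 \<le> 2 * exp (- (8 * real nm * delta^2 / (9 * (mu1 - mu2)^2)))"
  proof -
    interpret H: Hoeffding_ineq M "Inr ` {..<nm}" Bv "\<lambda>_. 0" "\<lambda>_. 1" "real nm * q"
    proof unfold_locales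
      show "indep_vars (\<lambda>_. borel) Bv (Inr ` {..<nm})"
        by (rule indep_vars_subset[OF indB]) (auto simp: K_def)
      show "real nm * q \<equiv> (\<Sum>k\<in>Inr ` {..<nm}. expectation (Bv k))"
        by (simp add: sum.reindex EBm)
    qed (auto simp: Bv_def)
    have "prob {x\<in>space M. \<bar>(\<Sum>k\<in>Inr ` {..<nm}. Bv k x) - real nm * q\<bar> \<ge> real nm * t1}
       \<le> 2 * exp (-2 * (real nm * t1)\<^sup>2 / (\<Sum>k\<in>Inr ` {..<nm}. (1 - 0)\<^sup>2))"
      using H.Hoeffding_ineq_abs_ge[of "real nm * t1"] t1 npos by (simp add: card_image)
    moreover have "{x\<in>space M. \<bar>(\<Sum>k\<in>Inr ` {..<nm}. Bv k x) - real nm * q\<bar> \<ge> real nm * t1} = B2"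
    proof -
      have "(\<Sum>k\<in>Inr ` {..<nm}. Bv k x) = (\<Sum>i<nm. (of_bool (Im i x) :: real))" for x
        by (subst sum.reindex) (auto simp: Bv_def Y_def)
      then show ?thesis by (simp only: B2_def)
    qed
    moreover have "-2 * (real nm * t1)\<^sup>2 / (\<Sum>k\<in>Inr ` {..<nm}. (1 - 0)\<^sup>2) = - (8 * real nm * delta^2 / (9 * (mu1 - mu2)^2))"
    proof -
      have "(\<Sum>k\<in>Inr ` {..<nm}. (1 - 0::real)\<^sup>2) = real nm" by (simp add: card_image)
      moreover have "-2 * (real nm * t1)\<^sup>2 / real nm = - (2 * real nm * t1^2)"
        using npos by (simp add: power2_eq_square field_simps)
      moreover have "t1^2 = 4 * delta^2 / (9 * (mu1 - mu2)^2)"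
        by (simp add: t1_def power_divide power_mult_distrib) (simp add: power2_eq_square algebra_simps)
      ultimately show ?thesis by (simp add: mult.assoc card_image)
    qed
    ultimately show ?thesis by metis
  qed
  define F where "F = (\<lambda>k (b::bool, x::real). case k of
      Inl (i::nat) \<Rightarrow> (x - (if b then mu1 else mu2)) / (2 * real np)
    | Inr (j::nat) \<Rightarrow> (x - (if b then mu2 else mu1)) / (2 * real nm))"
  define V where "V = (\<lambda>k \<omega>. F k (Y k \<omega>))"
  define sd where "sd = (\<lambda>k. case k of Inl (i::nat) \<Rightarrow> sigma / (2 * real np) | Inr (j::nat) \<Rightarrow> sigma / (2 * real nm))"
  have Fm: "F k \<in> borel_measurable (count_space UNIV \<Otimes>\<^sub>M borel)" for k
    by (cases k) (simp_all add: F_def)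
  have indV: "indep_vars (\<lambda>_. borel) V K"
    unfolding V_def by (rule indep_vars_compose2[OF indY Fm])
  have indV': "indep_vars (\<lambda>_. borel) (\<lambda>k \<omega>. - V k \<omega>) K"
    by (rule indep_vars_compose2[OF indV, where Y="\<lambda>_ x. - x"]) simp
  have mgfV: "(\<integral>\<^sup>+\<omega>. ennreal (exp (l * V k \<omega>)) \<partial>M) = ennreal (exp (l^2 * (sd k)^2 / 2))"
    if k: "k \<in> K" for k l
  proof -
    from k consider (L) i where "k = Inl i" "i < np" | (R) j where "k = Inr j" "j < nm"
      by (auto simp: K_def)
    then show ?thesis
    proof cases
      case L
      have "(\<integral>\<^sup>+\<omega>. ennreal (exp (l * V k \<omega>)) \<partial>M)
          = (\<integral>\<^sup>+\<omega>. ennreal (exp ((l / (2 * real np)) * (Xp i \<omega> - (if Ip i \<omega> then mu1 else mu2)))) \<partial>M)"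
        by (simp add: L V_def F_def Y_def)
      also have "\<dots> = ennreal (exp ((l / (2 * real np))^2 * sigma^2 / 2))"
        by (rule mixture_mgf[OF Ipm[OF L(2)] Xpm[OF L(2)] lawp1[OF L(2)] lawp0[OF L(2)] assms(4,5,3)])
      also have "(l / (2 * real np))^2 * sigma^2 = l^2 * (sd k)^2"
        by (simp add: L sd_def power_divide)
      finally show ?thesis .
    next
      case R
      have "(\<integral>\<^sup>+\<omega>. ennreal (exp (l * V k \<omega>)) \<partial>M)
          = (\<integral>\<^sup>+\<omega>. ennreal (exp ((l / (2 * real nm)) * (Xm j \<omega> - (if Im j \<omega> then mu2 else mu1)))) \<partial>M)"
        by (simp add: R V_def F_def Y_def)
      also have "\<dots> = ennreal (exp ((l / (2 * real nm))^2 * sigma^2 / 2))"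
        by (rule mixture_mgf[OF Imm[OF R(2)] Xmm[OF R(2)] lawm1[OF R(2)] lawm0[OF R(2)] assms(6,7,3)])
      also have "(l / (2 * real nm))^2 * sigma^2 = l^2 * (sd k)^2"
        by (simp add: R sd_def power_divide)
      finally show ?thesis .
    qed
  qed
  have Ssd: "(\<Sum>k\<in>K. (sd k)^2) = sigma^2 / (4 * real np) + sigma^2 / (4 * real nm)"
  proof -
    have "(\<Sum>k\<in>K. (sd k)^2) = (\<Sum>k\<in>Inl ` {..<np}. (sd k)^2) + (\<Sum>k\<in>Inr ` {..<nm}. (sd k)^2)"
      unfolding K_def by (rule sum.union_disjoint) auto
    also have "\<dots> = real np * (sigma / (2 * real np))^2 + real nm * (sigma / (2 * real nm))^2"
      by (simp add: sum.reindex sd_def)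
    also have "\<dots> = sigma^2 / (4 * real np) + sigma^2 / (4 * real nm)"
      using npos by (simp add: power2_eq_square field_simps)
    finally show ?thesis .
  qed
  have Spos: "(\<Sum>k\<in>K. (sd k)^2) > 0"
    unfolding Ssd using npos assms(3) by (intro add_pos_pos divide_pos_pos) auto
  have gexp: "- ((delta/3)^2) / (2 * (\<Sum>k\<in>K. (sd k)^2))
      = - (2 * delta^2 / (9 * sigma^2)) * (real np * real nm / (real nm + real np))"
  proof -
    have "sigma * (sigma * (real nm * 18)) + sigma * (sigma * (real np * 18)) > 0"
      using npos assms(3) by (intro add_pos_pos mult_pos_pos) auto
    then show ?thesis
      unfolding Ssd using npos assms(3) by (simp add: power2_eq_square divide_simps) (simp add: algebra_simps)
  qed
  define B3 where "B3 = {\<omega>\<in>space M. (\<Sum>k\<in>K. V k \<omega>) \<ge> delta / 3}"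
  define B4 where "B4 = {\<omega>\<in>space M. (\<Sum>k\<in>K. - V k \<omega>) \<ge> delta / 3}"
  have PB3: "prob B3 \<le> exp (- (2 * delta^2 / (9 * sigma^2)) * (real np * real nm / (real nm + real np)))"
    unfolding B3_def gexp[symmetric]
    by (rule subgauss_tail[OF finK indV _ Spos]) (use mgfV assms(15) in auto)
  have PB4: "prob B4 \<le> exp (- (2 * delta^2 / (9 * sigma^2)) * (real np * real nm / (real nm + real np)))"
    unfolding B4_def gexp[symmetric]
  proof (rule subgauss_tail[OF finK indV' _ Spos])
    fix k l assume "k \<in> K"
    then show "(\<integral>\<^sup>+\<omega>. ennreal (exp (l * - V k \<omega>)) \<partial>M) \<le> ennreal (exp (l^2 * (sd k)^2 / 2))"
      using mgfV[of k "-l"] by simp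
  qed (use assms(15) in auto)
  have Vm: "\<And>k. k \<in> K \<Longrightarrow> V k \<in> borel_measurable M"
    using indV unfolding indep_vars_def by blast
  have SVm[measurable]: "(\<lambda>\<omega>. \<Sum>k\<in>K. V k \<omega>) \<in> borel_measurable M"
    by (rule borel_measurable_sum) (simp add: Vm)
  have SVm'[measurable]: "(\<lambda>\<omega>. \<Sum>k\<in>K. - V k \<omega>) \<in> borel_measurable M"
    by (rule borel_measurable_sum) (simp add: Vm)
  define D where "D = (\<lambda>\<omega>. (1/2) * ((1 / real np) * (\<Sum>i<np. Xp i \<omega>) + (1 / real nm) * (\<Sum>j<nm. Xm j \<omega>))
        - (mu1 + mu2) / 2 - (p - q) * (mu1 - mu2) / 2)"
  define E where "E = {\<omega> \<in> space M. \<bar>D \<omega>\<bar> \<le> delta}"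
  have Dm[measurable]: "D \<in> borel_measurable M" unfolding D_def by measurable
  have Eev: "E \<in> events" unfolding E_def by measurable
  have B1ev: "B1 \<in> events" unfolding B1_def by measurable
  have B2ev: "B2 \<in> events" unfolding B2_def by measurable
  have B3ev: "B3 \<in> events" unfolding B3_def by measurable
  have B4ev: "B4 \<in> events" unfolding B4_def by measurable
  have SV: "(\<Sum>k\<in>K. V k \<omega>) = ((\<Sum>i<np. Xp i \<omega>) - real np * mu2 - (mu1 - mu2) * (\<Sum>i<np. (of_bool (Ip i \<omega>) :: real))) / (2 * real np)
      + ((\<Sum>j<nm. Xm j \<omega>) - real nm * mu1 + (mu1 - mu2) * (\<Sum>j<nm. (of_bool (Im j \<omega>) :: real))) / (2 * real nm)" for \<omega>
  proof -
    have "(\<Sum>k\<in>K. V k \<omega>) = (\<Sum>k\<in>Inl ` {..<np}. V k \<omega>) + (\<Sum>k\<in>Inr ` {..<nm}. V k \<omega>)"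
      unfolding K_def by (rule sum.union_disjoint) auto
    also have "(\<Sum>k\<in>Inl ` {..<np}. V k \<omega>) = (\<Sum>i<np. (Xp i \<omega> - mu2 - (mu1 - mu2) * of_bool (Ip i \<omega>)) / (2 * real np))"
      by (simp add: sum.reindex V_def F_def Y_def) (rule sum.cong, auto)
    also have "\<dots> = ((\<Sum>i<np. Xp i \<omega>) - real np * mu2 - (mu1 - mu2) * (\<Sum>i<np. (of_bool (Ip i \<omega>) :: real))) / (2 * real np)"
      by (simp add: sum_divide_distrib[symmetric] sum_subtractf sum_distrib_left)
    also have "(\<Sum>k\<in>Inr ` {..<nm}. V k \<omega>) = (\<Sum>j<nm. (Xm j \<omega> - mu1 + (mu1 - mu2) * of_bool (Im j \<omega>)) / (2 * real nm))"
      by (simp add: sum.reindex V_def F_def Y_def) (rule sum.cong, auto)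
    also have "\<dots> = ((\<Sum>j<nm. Xm j \<omega>) - real nm * mu1 + (mu1 - mu2) * (\<Sum>j<nm. (of_bool (Im j \<omega>) :: real))) / (2 * real nm)"
      by (simp add: sum_divide_distrib[symmetric] sum_subtractf sum.distrib sum_distrib_left)
    finally show ?thesis .
  qed
  have key: "D \<omega> = (mu1 - mu2) / (2 * real np) * ((\<Sum>i<np. (of_bool (Ip i \<omega>) :: real)) - real np * p)
      - (mu1 - mu2) / (2 * real nm) * ((\<Sum>j<nm. (of_bool (Im j \<omega>) :: real)) - real nm * q)
      + (\<Sum>k\<in>K. V k \<omega>)" for \<omega>
    unfolding SV D_def using npos by (simp add: field_simps)
  have sub: "space M - E \<subseteq> B1 \<union> B2 \<union> B3 \<union> B4"
  proof
    fix \<omega> assume w: "\<omega> \<in> space M - E"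
    show "\<omega> \<in> B1 \<union> B2 \<union> B3 \<union> B4"
    proof (rule ccontr)
      assume "\<omega> \<notin> B1 \<union> B2 \<union> B3 \<union> B4"
      with w have h1: "\<bar>(\<Sum>i<np. (of_bool (Ip i \<omega>) :: real)) - real np * p\<bar> < real np * t1"
        and h2: "\<bar>(\<Sum>j<nm. (of_bool (Im j \<omega>) :: real)) - real nm * q\<bar> < real nm * t1"
        and h3: "(\<Sum>k\<in>K. V k \<omega>) < delta / 3" and h4: "(\<Sum>k\<in>K. - V k \<omega>) < delta / 3"
        by (auto simp: B1_def B2_def B3_def B4_def)
      have c1: "(mu1 - mu2) / (2 * real np) > 0" "(mu1 - mu2) / (2 * real nm) > 0"
        using d12 npos by auto
      have a1: "\<bar>(mu1 - mu2) / (2 * real np) * ((\<Sum>i<np. (of_bool (Ip i \<omega>) :: real)) - real np * p)\<bar> < delta / 3"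
      proof -
        have "\<bar>(mu1 - mu2) / (2 * real np) * ((\<Sum>i<np. (of_bool (Ip i \<omega>) :: real)) - real np * p)\<bar>
            = (mu1 - mu2) / (2 * real np) * \<bar>(\<Sum>i<np. (of_bool (Ip i \<omega>) :: real)) - real np * p\<bar>"
          using c1 by (simp only: abs_mult abs_of_pos)
        also have "\<dots> < (mu1 - mu2) / (2 * real np) * (real np * t1)"
          by (rule mult_strict_left_mono[OF h1 c1(1)])
        also have "\<dots> = delta / 3" using npos d12 by (simp add: t1_def field_simps)
        finally show ?thesis .
      qed
      have a2: "\<bar>(mu1 - mu2) / (2 * real nm) * ((\<Sum>j<nm. (of_bool (Im j \<omega>) :: real)) - real nm * q)\<bar> < delta / 3"
      proof -
        have "\<bar>(mu1 - mu2) / (2 * real nm) * ((\<Sum>j<nm. (of_bool (Im j \<omega>) :: real)) - real nm * q)\<bar>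
            = (mu1 - mu2) / (2 * real nm) * \<bar>(\<Sum>j<nm. (of_bool (Im j \<omega>) :: real)) - real nm * q\<bar>"
          using c1 by (simp only: abs_mult abs_of_pos)
        also have "\<dots> < (mu1 - mu2) / (2 * real nm) * (real nm * t1)"
          by (rule mult_strict_left_mono[OF h2 c1(2)])
        also have "\<dots> = delta / 3" using npos d12 by (simp add: t1_def field_simps)
        finally show ?thesis .
      qed
      have a3: "\<bar>\<Sum>k\<in>K. V k \<omega>\<bar> < delta / 3" using h3 h4 by (simp add: sum_negf)
      have "\<bar>D \<omega>\<bar> \<le> delta" unfolding key using a1 a2 a3 by linarith
      with w show False by (auto simp: E_def)
    qed
  qed
  have "prob (space M - E) \<le> prob (B1 \<union> B2 \<union> B3 \<union> B4)"
    by (rule finite_measure_mono[OF sub]) (use B1ev B2ev B3ev B4ev in auto)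
  also have "\<dots> \<le> prob B1 + prob B2 + prob B3 + prob B4"
    using B1ev B2ev B3ev B4ev
    by (meson add_right_mono measure_Un_le order.trans sets.Un)
  finally have "prob (space M - E) \<le> prob B1 + prob B2 + prob B3 + prob B4" .
  then have "1 - prob E \<le> prob B1 + prob B2 + prob B3 + prob B4"
    by (simp add: prob_compl[OF Eev])
  then show ?thesis
    using PB1 PB2 PB3 PB4 unfolding E_def D_def by linarith
qed

end
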